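(* Let $C$ be a linear code over $\mathbb{Z}_4$ of type $4^{k_1}2^{k_2}$ and length $n$ which is projective, Plotkin-optimal, and has exactly two distinct nonzero Lee weights. Then there is an integer $t$ with $1\le t\le k_1$ such that $$n=d_L(C)=2^{2k_1+k_2-1}-2^{2k_1+k_2-t-1}.$$ Moreover, the nonzero Lee weights of $C$ are $w_1=2^{2k_1+k_2-1}-2^{2k_1+k_2-t-1}$ and $w_2=2^{2k_1+k_2-1}$, and $A_{w_1}=2^{2k_1+k_2}-2^t$, $A_{w_2}=2^t-1$.
   Context: A linear code of length $n$ over $\mathbb{Z}_4$ is a $\mathbb{Z}_4$-submodule of $\mathbb{Z}_4^n$; it has type $4^{k_1}2^{k_2}$ if it is isomorphic as a group to $\mathbb{Z}_4^{k_1}\times\mathbb{Z}_2^{k_2}$ (so $|C|=4^{k_1}2^{k_2}$). The Lee weight on $\mathbb{Z}_4$ is $w_L(0)=0,w_L(1)=1,w_L(2)=2,w_L(3)=1$, extended additively to vectors; $d_L(C)$ is the minimum Lee weight of a nonzero codeword. $C$ is Plotkin-optimal if $d_L(C)=\lfloor \frac{|C|}{|C|-1}n\rfloor$. The dual $C^\perp$ is taken with respect to the inner product $\mathbf{x}\cdot\mathbf{y}=\sum x_iy_i\in\mathbb{Z}_4$, and $C$ is projective if $d_L(C^\perp)\ge 3$. $A_w$ denotes the number of codewords of $C$ of Lee weight $w$. *)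

theory Defs
  imports Complex_Main "HOL-Library.Numeral_Type" "HOL-Library.Function_Algebras"
begin

text \<open>Vectors of length n over Z4 are functions nat => 4 vanishing outside {..<n}.
  The ring Z4 is the numeral type 4 of HOL-Library.Numeral_Type.\<close>

definition vecs :: "nat \<Rightarrow> (nat \<Rightarrow> 4) set" where
  "vecs n = {x. \<forall>i\<ge>n. x i = 0}"

definition linear_code :: "nat \<Rightarrow> (nat \<Rightarrow> 4) set \<Rightarrow> bool" where
  "linear_code n C \<longleftrightarrow> C \<subseteq> vecs n \<and> 0 \<in> C \<and>
     (\<forall>x\<in>C. \<forall>y\<in>C. x + y \<in> C) \<and> (\<forall>c::4. \<forall>x\<in>C. (\<lambda>i. c * x i) \<in> C)"

text \<open>Model of Z4^k1 x Z2^k2, with Z2 realised as the subgroup {0,2} of Z4.\<close>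
definition model_group :: "nat \<Rightarrow> nat \<Rightarrow> (nat \<Rightarrow> 4) set" where
  "model_group k1 k2 = {g. (\<forall>i. k1 \<le> i \<and> i < k1 + k2 \<longrightarrow> g i \<in> {0, 2}) \<and>
                          (\<forall>i\<ge>k1 + k2. g i = 0)}"

definition has_type :: "(nat \<Rightarrow> 4) set \<Rightarrow> nat \<Rightarrow> nat \<Rightarrow> bool" where
  "has_type C k1 k2 \<longleftrightarrow> (\<exists>\<phi>. bij_betw \<phi> (model_group k1 k2) C \<and>
      (\<forall>x\<in>model_group k1 k2. \<forall>y\<in>model_group k1 k2. \<phi> (x + y) = \<phi> x + \<phi> y))"

definition lee :: "4 \<Rightarrow> nat" where
  "lee a = (if a = 0 then 0 else if a = 2 then 2 else 1)"

definition lee_wt :: "nat \<Rightarrow> (nat \<Rightarrow> 4) \<Rightarrow> nat" where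
  "lee_wt n x = (\<Sum>i<n. lee (x i))"

definition lee_dist :: "nat \<Rightarrow> (nat \<Rightarrow> 4) set \<Rightarrow> nat" where
  "lee_dist n C = Min {lee_wt n x | x. x \<in> C \<and> x \<noteq> 0}"

definition plotkin_optimal :: "nat \<Rightarrow> (nat \<Rightarrow> 4) set \<Rightarrow> bool" where
  "plotkin_optimal n C \<longleftrightarrow>
     int (lee_dist n C) = \<lfloor>real (card C) / (real (card C) - 1) * real n\<rfloor>"

definition dual_code :: "nat \<Rightarrow> (nat \<Rightarrow> 4) set \<Rightarrow> (nat \<Rightarrow> 4) set" where
  "dual_code n C = {y \<in> vecs n. \<forall>x\<in>C. (\<Sum>i<n. x i * y i) = 0}"

text \<open>d_L(C^perp) >= 3, with the convention that the trivial code has minimum distance infinity.\<close>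
definition projective :: "nat \<Rightarrow> (nat \<Rightarrow> 4) set \<Rightarrow> bool" where
  "projective n C \<longleftrightarrow> (\<forall>y\<in>dual_code n C. y \<noteq> 0 \<longrightarrow> 3 \<le> lee_wt n y)"

definition nonzero_weights :: "nat \<Rightarrow> (nat \<Rightarrow> 4) set \<Rightarrow> nat set" where
  "nonzero_weights n C = {lee_wt n x | x. x \<in> C \<and> x \<noteq> 0}"

definition weight_count :: "nat \<Rightarrow> (nat \<Rightarrow> 4) set \<Rightarrow> nat \<Rightarrow> nat" where
  "weight_count n C w = card {x \<in> C. lee_wt n x = w}"

end

theory Submission
  imports Defs "HOL-Library.FuncSet" "HOL-Computational_Algebra.Primes"
begin


lemma all4: "(x::4) = 0 \<or> x = 1 \<or> x = 2 \<or> x = 3"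
proof (cases x rule: bit0_cases)
  case (of_int z)
  then have "z = 0 \<or> z = 1 \<or> z = 2 \<or> z = 3" by auto
  then show ?thesis using of_int by auto
qed

lemma cases4: "\<lbrakk>P 0; P 1; P 2; P 3\<rbrakk> \<Longrightarrow> P (x::4)"
  using all4[of x] by auto

definition om :: "4 \<Rightarrow> complex" where
 "om a = (if a = 0 then 1 else if a = 1 then \<i> else if a = 2 then -1 else -\<i>)"

lemma om_add: "om (a + b) = om a * om b"
  by (rule cases4[of _ a]; rule cases4[of _ b]; simp add: om_def)
lemma om_diff: "om (a - b) = om a * cnj (om b)"
  by (rule cases4[of _ a]; rule cases4[of _ b]; simp add: om_def)
lemma om_one_iff: "om a = 1 \<longleftrightarrow> a = 0"
  by (rule cases4[of _ a]; simp add: om_def complex_eq_iff)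
lemma om_0[simp]: "om 0 = 1" by (simp add: om_def)
lemma lee_sq: "real (lee a) * real (lee a) = 3/2 - 2 * Re (om a) + Re (om (a*2)) / 2"
  by (rule cases4[of _ a]; simp add: om_def lee_def)
lemma lee_mult: "real (lee a) * real (lee b) = 1 - Re (om a) - Re (om b) + Re (om (a+b))/2 + Re (om (a+b*3))/2"
  by (rule cases4[of _ a]; rule cases4[of _ b]; simp add: om_def lee_def)
lemma lee_re: "real (lee a) = 1 - Re (om a)"
  by (rule cases4[of _ a]; simp add: om_def lee_def)
lemma lee_0[simp]: "lee 0 = 0" by (simp add: lee_def)
lemma lee_pos: "a \<noteq> 0 \<Longrightarrow> lee a \<ge> 1" by (simp add: lee_def)
lemma neg4: "- (a::4) = a * 3"
  by (rule cases4[of _ a]; simp)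
lemma times4: "(a::4) * 2 * 2 = 0"
  by (rule cases4[of _ a]; simp)
lemma even02: "(a::4) \<in> {0,2} \<Longrightarrow> a * 2 = 0" by auto

lemma finite_vecs: "finite (vecs n)"
proof -
  have "vecs n \<subseteq> (\<lambda>xs i. if i < n then xs ! i else 0) ` {xs. set xs \<subseteq> UNIV \<and> length xs = n}"
  proof
    fix x assume "x \<in> vecs n"
    then have "x = (\<lambda>i. if i < n then map x [0..<n] ! i else 0)"
      by (auto simp: vecs_def fun_eq_iff)
    then show "x \<in> (\<lambda>xs i. if i < n then xs ! i else 0) ` {xs. set xs \<subseteq> UNIV \<and> length xs = n}"
      by (intro image_eqI[where x="map x [0..<n]"]) auto
  qed
  then show ?thesis by (rule finite_subset) (intro finite_imageI finite_lists_length_eq, simp)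
qed

lemma lc_finite: "linear_code n C \<Longrightarrow> finite C"
  using finite_vecs finite_subset unfolding linear_code_def by blast
lemma lc_add: "linear_code n C \<Longrightarrow> x \<in> C \<Longrightarrow> y \<in> C \<Longrightarrow> x + y \<in> C"
  unfolding linear_code_def by blast
lemma lc_0: "linear_code n C \<Longrightarrow> 0 \<in> C"
  unfolding linear_code_def by blast
lemma lc_neg: "linear_code n C \<Longrightarrow> x \<in> C \<Longrightarrow> - x \<in> C"
proof -
  assume a: "linear_code n C" "x \<in> C"
  have "- x = (\<lambda>i. 3 * x i)" by (auto simp: fun_eq_iff neg4 mult.commute)
  then show ?thesis using a unfolding linear_code_def by metis
qed
lemma lc_diff: "linear_code n C \<Longrightarrow> x \<in> C \<Longrightarrow> y \<in> C \<Longrightarrow> x - y \<in> C"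
  using lc_add lc_neg by (metis diff_conv_add_uminus)

lemma charsum:
  fixes C :: "(nat \<Rightarrow> 4) set" and \<chi> :: "(nat \<Rightarrow> 4) \<Rightarrow> 4"
  assumes fin: "finite C" and cl: "\<And>x y. x \<in> C \<Longrightarrow> y \<in> C \<Longrightarrow> x + y \<in> C"
    and cld: "\<And>x y. x \<in> C \<Longrightarrow> y \<in> C \<Longrightarrow> x - y \<in> C"
    and add: "\<And>x y. x \<in> C \<Longrightarrow> y \<in> C \<Longrightarrow> \<chi> (x + y) = \<chi> x + \<chi> y"
    and c: "c \<in> C" "\<chi> c \<noteq> 0"
  shows "(\<Sum>x\<in>C. om (\<chi> x)) = 0"
proof -
  have bij: "bij_betw (\<lambda>x. x + c) C C"
    unfolding bij_betw_def
  proof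
    show "inj_on (\<lambda>x. x + c) C" by (auto simp: inj_on_def)
    show "(\<lambda>x. x + c) ` C = C"
    proof
      show "(\<lambda>x. x + c) ` C \<subseteq> C" using cl c by auto
      show "C \<subseteq> (\<lambda>x. x + c) ` C"
      proof
        fix y assume "y \<in> C"
        then have "y - c \<in> C" using cld c by auto
        then show "y \<in> (\<lambda>x. x + c) ` C" by (intro image_eqI[where x="y - c"]) auto
      qed
    qed
  qed
  let ?S = "\<Sum>x\<in>C. om (\<chi> x)"
  have "?S = (\<Sum>x\<in>C. om (\<chi> (x + c)))"
    using sum.reindex_bij_betw[OF bij, of "\<lambda>x. om (\<chi> x)"] by simp
  also have "\<dots> = (\<Sum>x\<in>C. om (\<chi> x) * om (\<chi> c))"
    using add c by (intro sum.cong) (auto simp: om_add)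
  also have "\<dots> = ?S * om (\<chi> c)" by (simp add: sum_distrib_right)
  finally have "?S * (1 - om (\<chi> c)) = 0" by (simp add: algebra_simps)
  moreover have "1 - om (\<chi> c) \<noteq> 0" using om_one_iff c by auto
  ultimately show ?thesis by simp
qed

lemma charsum_re:
  assumes "linear_code n C" "\<And>x y. x \<in> C \<Longrightarrow> y \<in> C \<Longrightarrow> \<chi> (x + y) = \<chi> x + \<chi> y"
    "\<exists>c\<in>C. \<chi> c \<noteq> 0"
  shows "(\<Sum>x\<in>C. Re (om (\<chi> x))) = 0"
proof -
  obtain c where "c \<in> C" "\<chi> c \<noteq> 0" using assms by blast
  then have "(\<Sum>x\<in>C. om (\<chi> x)) = 0"
    using charsum[of C \<chi> c] lc_finite lc_add lc_diff assms by blast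
  then show ?thesis by (metis Re_sum zero_complex.sel(1))
qed



lemma proj_single:
  assumes lc: "linear_code n C" and pr: "projective n C" and i: "i < n"
  shows "\<exists>x\<in>C. x i * 2 \<noteq> 0"
proof (rule ccontr)
  assume "\<not> ?thesis"
  then have h: "\<forall>x\<in>C. x i * 2 = 0" by blast
  define y :: "nat \<Rightarrow> 4" where "y = (\<lambda>k. if k = i then 2 else 0)"
  have "y \<in> dual_code n C"
  proof -
    have "y \<in> vecs n" using i by (auto simp: y_def vecs_def)
    moreover have "(\<Sum>k<n. x k * y k) = 0" if "x \<in> C" for x
    proof -
      have "(\<Sum>k<n. x k * y k) = (\<Sum>k<n. if k = i then x i * 2 else 0)"
        by (intro sum.cong) (auto simp: y_def)
      also have "\<dots> = x i * 2" using i by simp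
      finally show ?thesis using h that by simp
    qed
    ultimately show ?thesis by (auto simp: dual_code_def)
  qed
  moreover have "y \<noteq> 0" by (auto simp: y_def fun_eq_iff)
  moreover have "lee_wt n y = 2"
  proof -
    have "lee_wt n y = (\<Sum>k<n. if k = i then 2 else 0)"
      unfolding lee_wt_def by (intro sum.cong) (auto simp: y_def lee_def)
    also have "\<dots> = 2" using i by simp
    finally show ?thesis .
  qed
  ultimately show False using pr unfolding projective_def by fastforce
qed

lemma proj_pair:
  assumes lc: "linear_code n C" and pr: "projective n C" and i: "i < n" and j: "j < n"
    and ij: "i \<noteq> j" and ab: "lee a + lee b < 3" "a \<noteq> 0"
  shows "\<exists>x\<in>C. x i * a + x j * b \<noteq> 0"
proof (rule ccontr)
  assume "\<not> ?thesis"
  then have h: "\<forall>x\<in>C. x i * a + x j * b = 0" by blast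
  define y :: "nat \<Rightarrow> 4" where "y = (\<lambda>k. (if k = i then a else 0) + (if k = j then b else 0))"
  have "y \<in> dual_code n C"
  proof -
    have "y \<in> vecs n" using i j by (auto simp: y_def vecs_def)
    moreover have "(\<Sum>k<n. x k * y k) = 0" if "x \<in> C" for x
    proof -
      have "(\<Sum>k<n. x k * y k) = (\<Sum>k<n. (if k = i then x i * a else 0) + (if k = j then x j * b else 0))"
        by (intro sum.cong) (auto simp: y_def distrib_left)
      also have "\<dots> = x i * a + x j * b" using i j by (simp add: sum.distrib)
      finally show ?thesis using h that by simp
    qed
    ultimately show ?thesis by (auto simp: dual_code_def)
  qed
  moreover have "y \<noteq> 0" using ij ab by (auto simp: y_def fun_eq_iff intro!: exI[of _ i])
  moreover have "lee_wt n y = lee a + lee b"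
  proof -
    have "lee_wt n y = (\<Sum>k<n. (if k = i then lee a else 0) + (if k = j then lee b else 0))"
      unfolding lee_wt_def by (intro sum.cong) (use ij in \<open>auto simp: y_def\<close>)
    also have "\<dots> = lee a + lee b" using i j by (simp add: sum.distrib)
    finally show ?thesis .
  qed
  ultimately show False using pr ab unfolding projective_def by fastforce
qed

lemma proj_nz:
  assumes "linear_code n C" "projective n C" "i < n"
  shows "\<exists>x\<in>C. x i \<noteq> 0"
  using proj_single[OF assms] by (metis mult_zero_left)

lemma proj_sum:
  assumes "linear_code n C" "projective n C" "i < n" "j < n" "i \<noteq> j"
  shows "\<exists>x\<in>C. x i + x j \<noteq> 0"
  using proj_pair[OF assms, of 1 1] by (simp add: lee_def)

lemma proj_dif:
  assumes "linear_code n C" "projective n C" "i < n" "j < n" "i \<noteq> j"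
  shows "\<exists>x\<in>C. x i + x j * 3 \<noteq> 0"
  using proj_pair[OF assms, of 1 3] by (simp add: lee_def)

lemma m1:
  assumes lc: "linear_code n C" and pr: "projective n C" and i: "i < n"
  shows "(\<Sum>x\<in>C. real (lee (x i))) = real (card C)"
proof -
  have "(\<Sum>x\<in>C. real (lee (x i))) = (\<Sum>x\<in>C. 1 - Re (om (x i)))" by (simp add: lee_re)
  also have "\<dots> = real (card C) - (\<Sum>x\<in>C. Re (om ((\<lambda>x. x i) x)))" by (simp add: sum_subtractf)
  also have "(\<Sum>x\<in>C. Re (om ((\<lambda>x. x i) x))) = 0"
    by (rule charsum_re[OF lc]) (use proj_nz[OF lc pr i] in auto)
  finally show ?thesis by simp
qed

lemma m2d:
  assumes lc: "linear_code n C" and pr: "projective n C" and i: "i < n"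
  shows "(\<Sum>x\<in>C. real (lee (x i)) * real (lee (x i))) = 3/2 * real (card C)"
proof -
  have "(\<Sum>x\<in>C. real (lee (x i)) * real (lee (x i))) =
     (\<Sum>x\<in>C. 3/2 - 2 * Re (om ((\<lambda>x. x i) x)) + Re (om ((\<lambda>x. x i * 2) x)) / 2)" by (simp add: lee_sq)
  also have "\<dots> = 3/2 * real (card C) - 2 * (\<Sum>x\<in>C. Re (om ((\<lambda>x. x i) x))) + (\<Sum>x\<in>C. Re (om ((\<lambda>x. x i * 2) x))) / 2"
    by (simp add: sum.distrib sum_subtractf sum_distrib_left sum_divide_distrib)
  also have "(\<Sum>x\<in>C. Re (om ((\<lambda>x. x i) x))) = 0"
    by (rule charsum_re[OF lc]) (use proj_nz[OF lc pr i] in auto)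
  also have "(\<Sum>x\<in>C. Re (om ((\<lambda>x. x i * 2) x))) = 0"
    by (rule charsum_re[OF lc]) (use proj_single[OF lc pr i] in \<open>auto simp: distrib_right\<close>)
  finally show ?thesis by simp
qed

lemma m2o:
  assumes lc: "linear_code n C" and pr: "projective n C" and i: "i < n" and j: "j < n" and ij: "i \<noteq> j"
  shows "(\<Sum>x\<in>C. real (lee (x i)) * real (lee (x j))) = real (card C)"
proof -
  have "(\<Sum>x\<in>C. real (lee (x i)) * real (lee (x j))) =
     (\<Sum>x\<in>C. 1 - Re (om ((\<lambda>x. x i) x)) - Re (om ((\<lambda>x. x j) x)) + Re (om ((\<lambda>x. x i + x j) x))/2 + Re (om ((\<lambda>x. x i + x j * 3) x))/2)"
    by (simp add: lee_mult)
  also have "\<dots> = real (card C) - (\<Sum>x\<in>C. Re (om ((\<lambda>x. x i) x))) - (\<Sum>x\<in>C. Re (om ((\<lambda>x. x j) x)))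
      + (\<Sum>x\<in>C. Re (om ((\<lambda>x. x i + x j) x)))/2 + (\<Sum>x\<in>C. Re (om ((\<lambda>x. x i + x j * 3) x)))/2"
    by (simp add: sum.distrib sum_subtractf sum_distrib_left sum_divide_distrib)
  also have "(\<Sum>x\<in>C. Re (om ((\<lambda>x. x i) x))) = 0"
    by (rule charsum_re[OF lc]) (use proj_nz[OF lc pr i] in auto)
  also have "(\<Sum>x\<in>C. Re (om ((\<lambda>x. x j) x))) = 0"
    by (rule charsum_re[OF lc]) (use proj_nz[OF lc pr j] in auto)
  also have "(\<Sum>x\<in>C. Re (om ((\<lambda>x. x i + x j) x))) = 0"
    by (rule charsum_re[OF lc]) (use proj_sum[OF lc pr i j ij] in \<open>auto simp: algebra_simps\<close>)
  also have "(\<Sum>x\<in>C. Re (om ((\<lambda>x. x i + x j * 3) x))) = 0"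
    by (rule charsum_re[OF lc]) (use proj_dif[OF lc pr i j ij] in \<open>auto simp: algebra_simps\<close>)
  finally show ?thesis by simp
qed

lemma S1:
  assumes lc: "linear_code n C" and pr: "projective n C"
  shows "(\<Sum>x\<in>C. real (lee_wt n x)) = real n * real (card C)"
proof -
  have "(\<Sum>x\<in>C. real (lee_wt n x)) = (\<Sum>x\<in>C. \<Sum>i<n. real (lee (x i)))" by (simp add: lee_wt_def)
  also have "\<dots> = (\<Sum>i<n. \<Sum>x\<in>C. real (lee (x i)))" by (rule sum.swap)
  also have "\<dots> = (\<Sum>i<n. real (card C))" using m1[OF lc pr] by simp
  finally show ?thesis by simp
qed

lemma S2:
  assumes lc: "linear_code n C" and pr: "projective n C"
  shows "(\<Sum>x\<in>C. real (lee_wt n x) * real (lee_wt n x)) = (real n * real n + real n / 2) * real (card C)"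
proof -
  have "(\<Sum>x\<in>C. real (lee_wt n x) * real (lee_wt n x)) = (\<Sum>x\<in>C. \<Sum>i<n. \<Sum>j<n. real (lee (x i)) * real (lee (x j)))"
    by (simp add: lee_wt_def sum_product)
  also have "\<dots> = (\<Sum>i<n. \<Sum>j<n. \<Sum>x\<in>C. real (lee (x i)) * real (lee (x j)))"
    by (simp add: sum.swap[of _ C])
  also have "\<dots> = (\<Sum>i<n. \<Sum>j<n. real (card C) + (if i = j then real (card C) / 2 else 0))"
    using m2d[OF lc pr] m2o[OF lc pr] by (intro sum.cong) auto
  also have "\<dots> = (\<Sum>i<n. real n * real (card C) + real (card C) / 2)"
    by (simp add: sum.distrib)
  finally show ?thesis by (simp add: algebra_simps)
qed



lemma char_bound:
  fixes C :: "(nat \<Rightarrow> 4) set" and \<chi> :: "'i \<Rightarrow> (nat \<Rightarrow> 4) \<Rightarrow> 4"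
  assumes lc: "linear_code n C" and finI: "finite I"
    and add: "\<And>k x y. k \<in> I \<Longrightarrow> x \<in> C \<Longrightarrow> y \<in> C \<Longrightarrow> \<chi> k (x + y) = \<chi> k x + \<chi> k y"
    and dist: "\<And>k l. k \<in> I \<Longrightarrow> l \<in> I \<Longrightarrow> k \<noteq> l \<Longrightarrow> \<exists>x\<in>C. \<chi> k x \<noteq> \<chi> l x"
  shows "card I \<le> card C"
proof -
  have fin: "finite C" using lc_finite[OF lc] .
  have z: "0 \<in> C" using lc_0[OF lc] .
  define Z where "Z x = (\<Sum>k\<in>I. om (\<chi> k x))" for x
  have inner: "(\<Sum>x\<in>C. om (\<chi> k x - \<chi> l x)) = (if k = l then of_nat (card C) else 0)"
    if kI: "k \<in> I" and lI: "l \<in> I" for k l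
  proof (cases "k = l")
    case True then show ?thesis by simp
  next
    case False
    obtain c where c: "c \<in> C" "\<chi> k c \<noteq> \<chi> l c" using dist[OF kI lI False] by blast
    have "(\<Sum>x\<in>C. om ((\<lambda>x. \<chi> k x - \<chi> l x) x)) = 0"
      by (rule charsum[OF fin _ _ _ c(1)]) (use lc_add[OF lc] lc_diff[OF lc] add kI lI c in auto)
    then show ?thesis using False by simp
  qed
  have "(\<Sum>x\<in>C. Z x * cnj (Z x)) = (\<Sum>x\<in>C. \<Sum>k\<in>I. \<Sum>l\<in>I. om (\<chi> k x - \<chi> l x))"
    by (simp add: Z_def sum_product om_diff)
  also have "\<dots> = (\<Sum>k\<in>I. \<Sum>l\<in>I. \<Sum>x\<in>C. om (\<chi> k x - \<chi> l x))"
    by (simp add: sum.swap[of _ C])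
  also have "\<dots> = (\<Sum>k\<in>I. \<Sum>l\<in>I. if k = l then of_nat (card C) else 0)"
    using inner by (intro sum.cong) auto
  also have "\<dots> = of_nat (card I * card C)" using finI by simp
  finally have eq: "(\<Sum>x\<in>C. Z x * cnj (Z x)) = of_nat (card I * card C)" .
  have "(\<Sum>x\<in>C. Z x * cnj (Z x)) = of_real (\<Sum>x\<in>C. (cmod (Z x))^2)"
    by (simp add: complex_norm_square del: of_real_power)
  with eq have eqr: "(\<Sum>x\<in>C. (cmod (Z x))^2) = real (card I * card C)"
    by (metis of_real_eq_iff of_real_of_nat_eq)
  have chi0: "\<chi> k 0 = 0" if "k \<in> I" for k
    using add[OF that z z] by simp
  have "Z 0 = of_nat (card I)" using chi0 by (simp add: Z_def)
  then have h0: "(cmod (Z 0))^2 = real (card I)^2" by simp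
  have "(cmod (Z 0))^2 \<le> (\<Sum>x\<in>C. (cmod (Z x))^2)"
    by (rule member_le_sum[OF z]) (use fin in auto)
  then have "real (card I) * real (card I) \<le> real (card I) * real (card C)"
    using eqr h0 by (simp add: power2_eq_square)
  then show ?thesis
    by (metis mult_le_cancel_left_pos nat_less_le not_le of_nat_0_less_iff of_nat_le_iff zero_le)
qed

lemma mg_add: "g \<in> model_group k1 k2 \<Longrightarrow> h \<in> model_group k1 k2 \<Longrightarrow> g + h \<in> model_group k1 k2"
proof -
  assume g: "g \<in> model_group k1 k2" and h: "h \<in> model_group k1 k2"
  have "(g + h) i \<in> {0, 2}" if "k1 \<le> i" "i < k1 + k2" for i
  proof -
    have "g i \<in> {0,2}" "h i \<in> {0,2}" using g h that by (auto simp: model_group_def)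
    then show ?thesis by auto
  qed
  moreover have "(g + h) i = 0" if "k1 + k2 \<le> i" for i
    using g h that by (auto simp: model_group_def)
  ultimately show ?thesis unfolding model_group_def by auto
qed

lemma mg_card: "card (model_group k1 k2) = 4 ^ k1 * 2 ^ k2"
proof -
  define B where "B i = (if i < k1 then (UNIV::4 set) else {0,2})" for i
  define e where "e f = (\<lambda>i. if i < k1 + k2 then f i else (0::4))" for f :: "nat \<Rightarrow> 4"
  have img: "model_group k1 k2 = e ` (PiE {..<k1+k2} B)"
  proof
    show "model_group k1 k2 \<subseteq> e ` (PiE {..<k1+k2} B)"
    proof
      fix g assume g: "g \<in> model_group k1 k2"
      have "g = e (restrict g {..<k1+k2})" using g by (auto simp: e_def model_group_def fun_eq_iff)
      moreover have "restrict g {..<k1+k2} \<in> PiE {..<k1+k2} B" using g by (auto simp: B_def model_group_def)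
      ultimately show "g \<in> e ` (PiE {..<k1+k2} B)" by blast
    qed
    show "e ` (PiE {..<k1+k2} B) \<subseteq> model_group k1 k2"
    proof
      fix g assume "g \<in> e ` (PiE {..<k1+k2} B)"
      then obtain f where f: "f \<in> PiE {..<k1+k2} B" "g = e f" by blast
      have "f i \<in> {0,2}" if "k1 \<le> i" "i < k1 + k2" for i
        using PiE_mem[OF f(1), of i] that by (simp add: B_def)
      then show "g \<in> model_group k1 k2" using f(2) by (auto simp: model_group_def e_def)
    qed
  qed
  have inj: "inj_on e (PiE {..<k1+k2} B)"
  proof (rule inj_onI)
    fix f f' assume f: "f \<in> PiE {..<k1+k2} B" "f' \<in> PiE {..<k1+k2} B" "e f = e f'"
    show "f = f'"
    proof (rule PiE_ext[OF f(1,2)])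
      fix i assume "i \<in> {..<k1+k2}"
      then show "f i = f' i" using fun_cong[OF f(3), of i] by (simp add: e_def)
    qed
  qed
  have "card (model_group k1 k2) = (\<Prod>i<k1+k2. card (B i))"
    using img card_image[OF inj] card_PiE[of "{..<k1+k2}" B] by simp
  also have "\<dots> = 4 ^ k1 * 2 ^ k2"
  proof (induction k2)
    case 0
    have "(\<Prod>i<k1. card (B i)) = (\<Prod>i<k1. 4)" by (intro prod.cong) (auto simp: B_def)
    then show ?case by simp
  next
    case (Suc k2)
    have "card (B (k1 + k2)) = 2" by (simp add: B_def)
    then show ?case using Suc by simp
  qed
  finally show ?thesis .
qed



definition fS :: "nat \<Rightarrow> nat set \<Rightarrow> (nat \<Rightarrow> 4) \<Rightarrow> 4" where
  "fS k1 S g = (\<Sum>m\<in>S. if m < k1 then 2 * g m else g m)"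

lemma fS_add: "fS k1 S (g + h) = fS k1 S g + fS k1 S h"
  unfolding fS_def by (simp add: sum.distrib[symmetric] distrib_left if_distrib cong: if_cong)
  
lemma fS_even:
  assumes "g \<in> model_group k1 k2" "S \<subseteq> {..<k1+k2}"
  shows "fS k1 S g * 2 = 0"
proof -
  have "fS k1 S g * 2 = (\<Sum>m\<in>S. (if m < k1 then 2 * g m else g m) * 2)"
    unfolding fS_def by (simp add: sum_distrib_right)
  also have "\<dots> = (\<Sum>m\<in>S. 0)"
  proof (intro sum.cong refl)
    fix m assume m: "m \<in> S"
    show "(if m < k1 then 2 * g m else g m) * 2 = 0"
    proof (cases "m < k1")
      case True then show ?thesis using times4[of "g m"] by (simp add: mult.commute)
    next
      case False
      have "m < k1 + k2" using assms(2) m by auto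
      then have "g m \<in> {0,2}" using assms(1) False unfolding model_group_def by simp
      then show ?thesis using False by auto
    qed
  qed
  finally show ?thesis by simp
qed

lemma fS_unit:
  assumes "finite S" 
  shows "fS k1 S (\<lambda>m. if m = j then (if j < k1 then 1 else 2) else 0) = (if j \<in> S then 2 else 0)"
proof -
  have "fS k1 S (\<lambda>m. if m = j then (if j < k1 then 1 else 2) else 0) = (\<Sum>m\<in>S. if m = j then 2 else 0)"
    unfolding fS_def by (intro sum.cong) auto
  also have "\<dots> = (if j \<in> S then 2 else 0)" using assms by simp
  finally show ?thesis .
qed

lemma bound:
  assumes lc: "linear_code n C" and ty: "has_type C k1 k2" and pr: "projective n C"
  shows "2 * n + 2 ^ (k1 + k2) \<le> card C"
proof -
  let ?G = "model_group k1 k2"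
  obtain \<phi> where bij: "bij_betw \<phi> ?G C"
    and hom: "\<And>x y. x \<in> ?G \<Longrightarrow> y \<in> ?G \<Longrightarrow> \<phi> (x + y) = \<phi> x + \<phi> y"
    using ty unfolding has_type_def by blast
  define \<psi> where "\<psi> = inv_into ?G \<phi>"
  have inj: "inj_on \<phi> ?G" using bij bij_betw_def by blast
  have psiG: "\<psi> x \<in> ?G" if "x \<in> C" for x
    using that bij unfolding \<psi>_def by (metis bij_betw_def inv_into_into)
  have phipsi: "\<phi> (\<psi> x) = x" if "x \<in> C" for x
    using that bij unfolding \<psi>_def by (metis bij_betw_def f_inv_into_f)
  have psiphi: "\<psi> (\<phi> g) = g" if "g \<in> ?G" for g
    using that inj unfolding \<psi>_def by (simp add: inv_into_f_f)
  have phiC: "\<phi> g \<in> C" if "g \<in> ?G" for g using that bij by (metis bij_betw_def imageI)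
  have psiadd: "\<psi> (x + y) = \<psi> x + \<psi> y" if "x \<in> C" "y \<in> C" for x y
  proof -
    have "\<phi> (\<psi> x + \<psi> y) = x + y" using hom[OF psiG psiG] phipsi that by simp
    then have "\<psi> (x + y) = \<psi> (\<phi> (\<psi> x + \<psi> y))" by simp
    also have "\<dots> = \<psi> x + \<psi> y" using psiphi mg_add psiG that by simp
    finally show ?thesis .
  qed
  define I where "I = ({..<n} \<times> (UNIV :: bool set)) <+> Pow {..<k1+k2}"
  define \<chi> where "\<chi> = case_sum (\<lambda>(i,b) (x::nat \<Rightarrow> 4). if b then x i else - x i) (\<lambda>S x. fS k1 S (\<psi> x))"
  have cardI: "card I = 2 * n + 2 ^ (k1 + k2)"
    unfolding I_def by (simp add: card_Plus card_cartesian_product card_Pow)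
  have "card I \<le> card C"
  proof (rule char_bound[OF lc])
    show "finite I" unfolding I_def by simp
    show "\<chi> k (x + y) = \<chi> k x + \<chi> k y" if "k \<in> I" "x \<in> C" "y \<in> C" for k x y
      using that by (cases k) (auto simp: \<chi>_def psiadd fS_add)
    show "\<exists>x\<in>C. \<chi> k x \<noteq> \<chi> l x" if kI: "k \<in> I" and lI: "l \<in> I" and kl: "k \<noteq> l" for k l
    proof -
      have sgn: "\<exists>x\<in>C. \<chi> (Inl (i, b)) x * 2 \<noteq> 0" if "i < n" for i b
      proof -
        obtain x where "x \<in> C" "x i * 2 \<noteq> 0" using proj_single[OF lc pr \<open>i < n\<close>] by blast
        then show ?thesis by (intro bexI[of _ x]) (auto simp: \<chi>_def)
      qed
      have ev: "\<chi> (Inr S) x * 2 = 0" if "S \<subseteq> {..<k1+k2}" "x \<in> C" for S x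
        using fS_even[OF psiG[OF that(2)] that(1)] by (simp add: \<chi>_def)
      have ll: "\<exists>x\<in>C. \<chi> (Inl (i, b)) x \<noteq> \<chi> (Inl (i', b')) x"
        if "i < n" "i' < n" "(i, b) \<noteq> (i', b')" for i i' b b'
      proof (cases "b = b'")
        case True
        then have "i \<noteq> i'" using that by auto
        then obtain x where "x \<in> C" "x i + x i' * 3 \<noteq> 0" using proj_dif[OF lc pr \<open>i < n\<close> \<open>i' < n\<close>] by blast
        moreover have "x i + x i' * 3 = x i - x i'" by (simp add: neg4[symmetric])
        ultimately show ?thesis using True by (intro bexI[of _ x]) (auto simp: \<chi>_def)
      next
        case False
        show ?thesis
        proof (cases "i = i'")
          case True
          obtain x where "x \<in> C" "x i * 2 \<noteq> 0" using proj_single[OF lc pr \<open>i < n\<close>] by blast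
          moreover have "x i * 2 = x i - - x i" by (simp add: mult_2_right)
          moreover have "2 * x i \<noteq> 0" using calculation(2) by (simp add: mult.commute)
          ultimately show ?thesis using True False by (intro bexI[of _ x]) (cases b; auto simp: \<chi>_def)
        next
          case ne: False
          obtain x where "x \<in> C" "x i + x i' \<noteq> 0" using proj_sum[OF lc pr \<open>i < n\<close> \<open>i' < n\<close> ne] by blast
          then show ?thesis using False
            by (intro bexI[of _ x]) (cases b; auto simp: \<chi>_def neg_eq_iff_add_eq_0 eq_neg_iff_add_eq_0 add.commute)
        qed
      qed
      have rr: "\<exists>x\<in>C. \<chi> (Inr S) x \<noteq> \<chi> (Inr T) x"
        if "S \<subseteq> {..<k1+k2}" "T \<subseteq> {..<k1+k2}" "S \<noteq> T" for S T
      proof -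
        obtain j where j: "(j \<in> S) \<noteq> (j \<in> T)" using \<open>S \<noteq> T\<close> by blast
        then have jl: "j < k1 + k2" using that by auto
        define g :: "nat \<Rightarrow> 4" where "g = (\<lambda>m. if m = j then (if j < k1 then 1 else 2) else 0)"
        have gG: "g \<in> ?G" using jl by (auto simp: g_def model_group_def)
        have fin: "finite S" "finite T" using that finite_subset by auto
        have "fS k1 S g \<noteq> fS k1 T g" unfolding g_def fS_unit[OF fin(1)] fS_unit[OF fin(2)] using j by auto
        then show ?thesis using phiC[OF gG] psiphi[OF gG] by (intro bexI[of _ "\<phi> g"]) (auto simp: \<chi>_def)
      qed
      show ?thesis
      proof (cases k)
        case (Inl p)
        obtain i b where p: "p = (i, b)" by (cases p)
        have i: "i < n" using kI Inl p by (auto simp: I_def)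
        show ?thesis
        proof (cases l)
          case (Inl q)
          obtain i' b' where q: "q = (i', b')" by (cases q)
          have "i' < n" using lI Inl q by (auto simp: I_def)
          then show ?thesis using ll[OF i] kl \<open>k = Inl p\<close> Inl p q by auto
        next
          case (Inr T)
          have T: "T \<subseteq> {..<k1+k2}" using lI Inr by (auto simp: I_def)
          obtain x where "x \<in> C" "\<chi> (Inl (i, b)) x * 2 \<noteq> 0" using sgn[OF i] by blast
          then show ?thesis using ev[OF T] \<open>k = Inl p\<close> p Inr by (intro bexI[of _ x]) auto
        qed
      next
        case (Inr S)
        have S: "S \<subseteq> {..<k1+k2}" using kI Inr by (auto simp: I_def)
        show ?thesis
        proof (cases l)
          case (Inl q)
          obtain i b where q: "q = (i, b)" by (cases q)
          have i: "i < n" using lI Inl q by (auto simp: I_def)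
          obtain x where "x \<in> C" "\<chi> (Inl (i, b)) x * 2 \<noteq> 0" using sgn[OF i] by blast
          then show ?thesis using ev[OF S] \<open>k = Inr S\<close> q Inl by (intro bexI[of _ x]) force+
        next
          case (Inr T)
          have T: "T \<subseteq> {..<k1+k2}" using lI Inr by (auto simp: I_def)
          show ?thesis using rr[OF S T] kl \<open>k = Inr S\<close> Inr by auto
        qed
      qed
    qed
  qed
  then show ?thesis using cardI by simp
qed



lemma part:
  fixes f :: "(nat \<Rightarrow> 4) \<Rightarrow> nat" and g :: "nat \<Rightarrow> real"
  assumes fin: "finite C" and z: "0 \<in> C" and f0: "f 0 = 0"
    and ab: "\<And>x. x \<in> C \<Longrightarrow> x \<noteq> 0 \<Longrightarrow> f x = a \<or> f x = b" and "a \<noteq> b" "a \<noteq> 0" "b \<noteq> 0"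
  shows "(\<Sum>x\<in>C. g (f x)) = g 0 + real (card {x\<in>C. f x = a}) * g a + real (card {x\<in>C. f x = b}) * g b"
proof -
  have "(\<Sum>x\<in>C. g (f x)) = (\<Sum>x\<in>C. (if x = 0 then g 0 else 0) + (if f x = a then g a else 0) + (if f x = b then g b else 0))"
  proof (intro sum.cong refl)
    fix x assume x: "x \<in> C"
    show "g (f x) = (if x = 0 then g 0 else 0) + (if f x = a then g a else 0) + (if f x = b then g b else 0)"
    proof (cases "x = 0")
      case True then show ?thesis using f0 assms by simp
    next
      case False then show ?thesis using ab[OF x False] assms by auto
    qed
  qed
  also have "\<dots> = (\<Sum>x\<in>C. if x = 0 then g 0 else 0) + (\<Sum>x\<in>C. if f x = a then g a else 0) + (\<Sum>x\<in>C. if f x = b then g b else 0)"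
    by (simp add: sum.distrib)
  also have "(\<Sum>x\<in>C. if x = 0 then g 0 else 0) = g 0" using fin z by simp
  also have "(\<Sum>x\<in>C. if f x = a then g a else 0) = real (card {x\<in>C. f x = a}) * g a"
    using sum.inter_filter[OF fin, of "\<lambda>_. g a" "\<lambda>x. f x = a"] by simp
  also have "(\<Sum>x\<in>C. if f x = b then g b else 0) = real (card {x\<in>C. f x = b}) * g b"
    using sum.inter_filter[OF fin, of "\<lambda>_. g b" "\<lambda>x. f x = b"] by simp
  finally show ?thesis .
qed

theorem theorem4p6:
  fixes n k1 k2 :: nat and C :: "(nat \<Rightarrow> 4) set"
  assumes "linear_code n C"
    and "has_type C k1 k2"
    and "projective n C"
    and "plotkin_optimal n C"
    and "card (nonzero_weights n C) = 2"
  shows "\<exists>t::nat. 1 \<le> t \<and> t \<le> k1 \<and>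
           n = lee_dist n C \<and>
           lee_dist n C = 2 ^ (2 * k1 + k2 - 1) - 2 ^ (2 * k1 + k2 - t - 1) \<and>
           nonzero_weights n C = {2 ^ (2 * k1 + k2 - 1) - 2 ^ (2 * k1 + k2 - t - 1),
                                  2 ^ (2 * k1 + k2 - 1)} \<and>
           weight_count n C (2 ^ (2 * k1 + k2 - 1) - 2 ^ (2 * k1 + k2 - t - 1))
              = 2 ^ (2 * k1 + k2) - 2 ^ t \<and>
           weight_count n C (2 ^ (2 * k1 + k2 - 1)) = 2 ^ t - 1"
proof -
  note lc = assms(1) and ty = assms(2) and pr = assms(3) and po = assms(4) and cw = assms(5)
  define K where "K = 2 * k1 + k2"
  define N where "N = card C"
  have fin: "finite C" using lc_finite[OF lc] .
  have z: "0 \<in> C" using lc_0[OF lc] .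
  have NK: "N = 2 ^ K"
  proof -
    obtain \<phi> where "bij_betw \<phi> (model_group k1 k2) C" using ty unfolding has_type_def by blast
    then have "N = card (model_group k1 k2)" unfolding N_def by (simp add: bij_betw_same_card)
    also have "\<dots> = 4 ^ k1 * 2 ^ k2" by (rule mg_card)
    also have "\<dots> = 2 ^ K" by (simp add: K_def power_add power_mult)
    finally show ?thesis .
  qed
  have bnd: "2 * n + 2 ^ (k1 + k2) \<le> N" using bound[OF lc ty pr] unfolding N_def .
  define W where "W = nonzero_weights n C"
  obtain a b where Wab: "W = {a, b}" "a \<noteq> b" using cw unfolding W_def by (metis card_2_iff)
  have finW: "finite W" "W \<noteq> {}" using Wab by auto
  have wt0: "lee_wt n 0 = 0" by (simp add: lee_wt_def)
  have n1: "n \<ge> 1"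
  proof (rule ccontr)
    assume "\<not> n \<ge> 1"
    then have "n = 0" by simp
    then have "C \<subseteq> {0}" using lc by (auto simp: linear_code_def vecs_def fun_eq_iff)
    then have "W = {}" by (auto simp: W_def nonzero_weights_def)
    then show False using finW by simp
  qed
  have p1: "(1::nat) \<le> 2 ^ (k1 + k2)" by simp
  have b1: "2 * n + 1 \<le> N" using bnd p1 by linarith
  have N3: "N \<ge> 3" using b1 n1 by linarith
  have dn: "lee_dist n C = n"
  proof -
    have Npos: "real N - 1 > 0" using N3 by simp
    have lt: "real n < real N - 1" proof -
      have "real (2 * n + 1) \<le> real N" using b1 by (simp only: of_nat_le_iff)
      then show ?thesis using n1 by simp
    qed
    have eq: "real N / (real N - 1) * real n = real n + real n / (real N - 1)"
      using Npos by (simp add: field_simps)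
    have "0 \<le> real n / (real N - 1)" using Npos by simp
    moreover have "real n / (real N - 1) < 1" using Npos lt by simp
    ultimately have "\<lfloor>real N / (real N - 1) * real n\<rfloor> = int n"
      unfolding eq by (intro floor_unique) auto
    then show ?thesis using po unfolding plotkin_optimal_def N_def by simp
  qed
  have dMin: "lee_dist n C = Min W" by (simp add: lee_dist_def W_def nonzero_weights_def)
  have nW: "n \<in> W" using dn dMin Min_in[OF finW] by simp
  obtain w2 where W2: "W = {n, w2}" "w2 \<noteq> n"
    using Wab nW by (metis insert_commute insertE singletonD)
  have nw2: "n < w2" using Min_le[OF finW(1), of w2] W2 dn dMin by simp
  have wts: "lee_wt n x = n \<or> lee_wt n x = w2" if "x \<in> C" "x \<noteq> 0" for x
  proof -
    have "lee_wt n x \<in> W" using that by (auto simp: W_def nonzero_weights_def)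
    then show ?thesis using W2 by auto
  qed
  define A1 where "A1 = card {x\<in>C. lee_wt n x = n}"
  define A2 where "A2 = card {x\<in>C. lee_wt n x = w2}"
  have P: "(\<Sum>x\<in>C. g (lee_wt n x)) = g 0 + real A1 * g n + real A2 * g w2" for g :: "nat \<Rightarrow> real"
    unfolding A1_def A2_def by (rule part[where f="lee_wt n", OF fin z wt0 wts]) (use nw2 n1 in auto)
  have e0: "real N = 1 + real A1 + real A2" using P[of "\<lambda>_. 1"] unfolding N_def by simp
  have e1: "real A1 * real n + real A2 * real w2 = real n * real N"
    using P[of real] S1[OF lc pr] unfolding N_def by simp
  have e2: "real A1 * (real n * real n) + real A2 * (real w2 * real w2) = (real n * real n + real n / 2) * real N"
    using P[of "\<lambda>w. real w * real w"] S2[OF lc pr] unfolding N_def by simp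
  have r1: "real A2 * (real w2 - real n) = real n"
  proof -
    have "real A2 * (real w2 - real n) = (real A1 * real n + real A2 * real w2) - (real A1 + real A2) * real n"
      by (simp add: algebra_simps)
    also have "\<dots> = real n" using e1 e0 by (simp add: algebra_simps)
    finally show ?thesis .
  qed
  have r2: "real n * real w2 = real n * real N / 2"
  proof -
    have "real A2 * (real w2 - real n) * (real w2 + real n) = (real A1 * (real n * real n) + real A2 * (real w2 * real w2)) - (real A1 + real A2) * (real n * real n)"
      by (simp add: algebra_simps)
    also have "\<dots> = real n * real N / 2 + real n * real n" using e2 e0 by (simp add: algebra_simps)
    finally have "real n * (real w2 + real n) = real n * real N / 2 + real n * real n" using r1 by simp
    then show ?thesis by (simp add: algebra_simps)
  qed
  have w2N: "2 * w2 = N"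
  proof -
    have "real w2 = real N / 2" using r2 n1 by simp
    then show ?thesis by linarith
  qed
  have K1: "K \<ge> 1" using NK N3 by (cases K) auto
  have w2K: "w2 = 2 ^ (K - 1)"
  proof -
    have "(2::nat) ^ K = 2 * 2 ^ (K - 1)" using K1 by (cases K) auto
    then have "2 * w2 = 2 * 2 ^ (K - 1)" using w2N NK by simp
    then show ?thesis by simp
  qed
  have a2: "A2 * (w2 - n) = n"
    using r1 nw2 by (metis of_nat_diff of_nat_mult of_nat_eq_iff less_imp_le)
  have a2': "(A2 + 1) * (w2 - n) = 2 ^ (K - 1)"
  proof -
    have "(A2 + 1) * (w2 - n) = A2 * (w2 - n) + (w2 - n)" by simp
    then show ?thesis using a2 nw2 w2K by simp
  qed
  then have "A2 + 1 dvd 2 ^ (K - 1)" by (metis dvd_triv_left)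
  then obtain t where t: "t \<le> K - 1" "A2 + 1 = 2 ^ t"
    using divides_primepow_nat[OF two_is_prime_nat] by blast
  have A2pos: "A2 \<ge> 1"
  proof -
    have "w2 \<in> W" using W2 by simp
    then obtain x where "x \<in> C" "lee_wt n x = w2" by (auto simp: W_def nonzero_weights_def)
    then have "{x\<in>C. lee_wt n x = w2} \<noteq> {}" by blast
    then show ?thesis unfolding A2_def using fin by (simp add: Suc_le_eq card_gt_0_iff)
  qed
  have t1: "t \<ge> 1" using A2pos t by (cases t) auto
  have diffw: "w2 - n = 2 ^ (K - 1 - t)"
  proof -
    have e: "t + (K - 1 - t) = K - 1" using t by simp
    have "2 ^ t * (w2 - n) = (A2 + 1) * (w2 - n)" using t by simp
    also have "\<dots> = 2 ^ (t + (K - 1 - t))" using a2' e by simp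
    also have "\<dots> = 2 ^ t * 2 ^ (K - 1 - t)" by (simp add: power_add)
    finally have "2 ^ t * (w2 - n) = 2 ^ t * 2 ^ (K - 1 - t)" .
    then show ?thesis by simp
  qed
  have nval: "n = 2 ^ (K - 1) - 2 ^ (K - 1 - t)" using diffw w2K nw2 by simp
  have tk1: "t \<le> k1"
  proof -
    have "2 * 2 ^ (K - 1) = (2::nat) ^ K" using K1 by (cases K) auto
    moreover have "K - t = Suc (K - 1 - t)" using K1 t by arith
    then have "2 * 2 ^ (K - 1 - t) = (2::nat) ^ (K - t)" by simp
    ultimately have "2 * n = 2 ^ K - 2 ^ (K - t)" using nval by (simp add: diff_mult_distrib2)
    moreover have "(2::nat) ^ (K - t) \<le> 2 ^ K" by (simp add: power_increasing)
    ultimately have "2 ^ (k1 + k2) \<le> (2::nat) ^ (K - t)" using bnd NK by linarith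
    then have "k1 + k2 \<le> K - t" by (simp add: power_increasing_iff)
    then show ?thesis using t(1) unfolding K_def by arith
  qed
  have A2v: "A2 = 2 ^ t - 1" using t by simp
  have A1v: "A1 = 2 ^ K - 2 ^ t"
  proof -
    have "N = 1 + A1 + A2" using e0 by linarith
    then show ?thesis using NK t by simp
  qed
  have ex: "K - t - 1 = K - 1 - t" by simp
  show ?thesis
  proof (intro exI[of _ t] conjI)
    show "1 \<le> t" by (rule t1)
    show "t \<le> k1" by (rule tk1)
    show "n = lee_dist n C" using dn by simp
    show "lee_dist n C = 2 ^ (2 * k1 + k2 - 1) - 2 ^ (2 * k1 + k2 - t - 1)"
      using dn nval ex unfolding K_def by simp
    show "nonzero_weights n C = {2 ^ (2 * k1 + k2 - 1) - 2 ^ (2 * k1 + k2 - t - 1), 2 ^ (2 * k1 + k2 - 1)}"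
      using W2 nval w2K ex unfolding K_def W_def by simp
    show "weight_count n C (2 ^ (2 * k1 + k2 - 1) - 2 ^ (2 * k1 + k2 - t - 1)) = 2 ^ (2 * k1 + k2) - 2 ^ t"
      using A1v nval ex unfolding K_def A1_def weight_count_def by simp
    show "weight_count n C (2 ^ (2 * k1 + k2 - 1)) = 2 ^ t - 1"
      using A2v w2K unfolding K_def A2_def weight_count_def by simp
  qed
qed

end
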